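(* Let $(M,g,J)$ be an $RK$-manifold of real dimension $2n\ge 4$ which is of pointwise constant antiholomorphic sectional curvature $\nu$ (so $\nu$ is a function on $M$). Then at every point $p\in M$ the curvature tensor $R$ has the form $$R=\frac16\psi+\nu R_1-\frac{2n-1}{3}\,\nu R_2,$$ and moreover $$3S'-(n+1)S=\frac{1}{2n}\bigl(3\tau'-(n+1)\tau\bigr)g,\qquad \nu=\frac{(2n+1)\tau-3\tau'}{8n(n^2-1)}.$$
   Context: $(M,g,J)$ is an almost Hermitian manifold with metric $g$, almost complex structure $J$, and curvature tensor $R$ of type $(0,4)$, with sign convention such that the sectional curvature of a 2-plane $\alpha\subset T_pM$ with orthonormal basis $\{x,y\}$ is $K(\alpha,p)=R(x,y,y,x)$. A 2-plane $\alpha$ is antiholomorphic if $J\alpha\perp\alpha$. $M$ has pointwise constant antiholomorphic sectional curvature $\nu$ if for every $p\in M$, $K(\alpha,p)=\nu(p)$ for all antiholomorphic 2-planes $\alpha\subset T_pM$. $M$ is an $RK$-manifold if $R(x,y,z,u)=R(Jx,Jy,Jz,Ju)$ for all $x,y,z,u\in T_pM$, $p\in M$. Define $R'(x,y,z,u)=R(x,y,Jz,Ju)$. For an orthonormal basis $\{E_1,\dots,E_{2n}\}$ of $T_pM$, the Ricci tensor is $S(y,z)=\sum_i R(E_i,y,z,E_i)$ and the scalar curvature $\tau=\sum_i S(E_i,E_i)$; similarly $S'(y,z)=\sum_i R'(E_i,y,z,E_i)$ and $\tau'=\sum_i S'(E_i,E_i)$. The tensors $R_1,R_2,\psi$ are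 $R_1(x,y,z,u)=g(y,z)g(x,u)-g(x,z)g(y,u)$; $R_2(x,y,z,u)=g(Jy,z)g(Jx,u)-g(Jx,z)g(Jy,u)-2g(Jx,y)g(Jz,u)$; $\psi(x,y,z,u)=g(Jy,z)S(Jx,u)-g(Jx,z)S(Jy,u)-2g(Jx,y)S(Jz,u)+g(Jx,u)S(Jy,z)-g(Jy,u)S(Jx,z)-2g(Jz,u)S(Jx,y)$. *)

theory Defs
  imports "HOL-Analysis.Analysis"
begin

text \<open>Pointwise model: the tangent space T_pM is modelled by a Euclidean space 'a
(of real dimension 2n) whose inner product is the metric g at p, i.e. we work in a
g_p-orthonormal frame.\<close>

definition multilinear4 :: "('a::real_vector \<Rightarrow> 'a \<Rightarrow> 'a \<Rightarrow> 'a \<Rightarrow> real) \<Rightarrow> bool" where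
  "multilinear4 T \<longleftrightarrow>
     (\<forall>y z u. linear (\<lambda>x. T x y z u)) \<and> (\<forall>x z u. linear (\<lambda>y. T x y z u)) \<and>
     (\<forall>x y u. linear (\<lambda>z. T x y z u)) \<and> (\<forall>x y z. linear (\<lambda>u. T x y z u))"

definition curvature_tensor :: "('a::real_inner \<Rightarrow> 'a \<Rightarrow> 'a \<Rightarrow> 'a \<Rightarrow> real) \<Rightarrow> bool" where
  "curvature_tensor R \<longleftrightarrow> multilinear4 R \<and>
     (\<forall>x y z u. R x y z u = - R y x z u) \<and>
     (\<forall>x y z u. R x y z u = - R x y u z) \<and>
     (\<forall>x y z u. R x y z u = R z u x y) \<and>
     (\<forall>x y z u. R x y z u + R y z x u + R z x y u = 0)"

definition almost_hermitian :: "('a::real_inner \<Rightarrow> 'a) \<Rightarrow> bool" where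
  "almost_hermitian J \<longleftrightarrow> linear J \<and> (\<forall>x. J (J x) = - x) \<and>
     (\<forall>x y. inner (J x) (J y) = inner x y)"

definition RK_cond :: "('a \<Rightarrow> 'a) \<Rightarrow> ('a \<Rightarrow> 'a \<Rightarrow> 'a \<Rightarrow> 'a \<Rightarrow> real) \<Rightarrow> bool" where
  "RK_cond J R \<longleftrightarrow> (\<forall>x y z u. R x y z u = R (J x) (J y) (J z) (J u))"

definition antiholomorphic_pair :: "('a::real_inner \<Rightarrow> 'a) \<Rightarrow> 'a \<Rightarrow> 'a \<Rightarrow> bool" where
  "antiholomorphic_pair J x y \<longleftrightarrow> norm x = 1 \<and> norm y = 1 \<and> inner x y = 0 \<and>
     inner (J x) x = 0 \<and> inner (J x) y = 0 \<and> inner (J y) x = 0 \<and> inner (J y) y = 0"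

definition const_antihol_curv :: "('a::real_inner \<Rightarrow> 'a) \<Rightarrow> ('a \<Rightarrow> 'a \<Rightarrow> 'a \<Rightarrow> 'a \<Rightarrow> real) \<Rightarrow> real \<Rightarrow> bool" where
  "const_antihol_curv J R \<nu> \<longleftrightarrow> (\<forall>x y. antiholomorphic_pair J x y \<longrightarrow> R x y y x = \<nu>)"

definition Rprime :: "('a \<Rightarrow> 'a) \<Rightarrow> ('a \<Rightarrow> 'a \<Rightarrow> 'a \<Rightarrow> 'a \<Rightarrow> real) \<Rightarrow> 'a \<Rightarrow> 'a \<Rightarrow> 'a \<Rightarrow> 'a \<Rightarrow> real" where
  "Rprime J R x y z u = R x y (J z) (J u)"

definition ricci :: "('a::euclidean_space \<Rightarrow> 'a \<Rightarrow> 'a \<Rightarrow> 'a \<Rightarrow> real) \<Rightarrow> 'a \<Rightarrow> 'a \<Rightarrow> real" where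
  "ricci R y z = (\<Sum>e\<in>Basis. R e y z e)"

definition scal :: "('a::euclidean_space \<Rightarrow> 'a \<Rightarrow> 'a \<Rightarrow> 'a \<Rightarrow> real) \<Rightarrow> real" where
  "scal R = (\<Sum>e\<in>Basis. ricci R e e)"

definition R1 :: "'a::real_inner \<Rightarrow> 'a \<Rightarrow> 'a \<Rightarrow> 'a \<Rightarrow> real" where
  "R1 x y z u = inner y z * inner x u - inner x z * inner y u"

definition R2 :: "('a::real_inner \<Rightarrow> 'a) \<Rightarrow> 'a \<Rightarrow> 'a \<Rightarrow> 'a \<Rightarrow> 'a \<Rightarrow> real" where
  "R2 J x y z u = inner (J y) z * inner (J x) u - inner (J x) z * inner (J y) u
                  - 2 * inner (J x) y * inner (J z) u"

definition psi :: "('a::real_inner \<Rightarrow> 'a) \<Rightarrow> ('a \<Rightarrow> 'a \<Rightarrow> real) \<Rightarrow> 'a \<Rightarrow> 'a \<Rightarrow> 'a \<Rightarrow> 'a \<Rightarrow> real" where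
  "psi J S x y z u =
     inner (J y) z * S (J x) u - inner (J x) z * S (J y) u - 2 * inner (J x) y * S (J z) u
   + inner (J x) u * S (J y) z - inner (J y) u * S (J x) z - 2 * inner (J z) u * S (J x) y"

end

theory Submission
  imports Defs
begin


lemma sum_inner_lin:
  assumes "linear (L::'a::euclidean_space \<Rightarrow> real)"
  shows "(\<Sum>e\<in>Basis. inner a e * L e) = L a"
proof -
  have "L a = L (\<Sum>e\<in>Basis. inner a e *\<^sub>R e)" by (simp add: euclidean_representation)
  also have "\<dots> = (\<Sum>e\<in>Basis. inner a e * L e)"
    by (simp add: linear_sum[OF assms] linear_scale[OF assms])
  finally show ?thesis by simp
qed

lemma sum_inner_lin':
  assumes "linear (L::'a::euclidean_space \<Rightarrow> real)"
  shows "(\<Sum>e\<in>Basis. inner e a * L e) = L a"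
  using sum_inner_lin[OF assms, of a] by (simp add: inner_commute)

lemma lin_rules:
  fixes f :: "'a::real_vector \<Rightarrow> real"
  assumes "linear f"
  shows "f (a+b) = f a + f b \<and> f (a-b) = f a - f b \<and> f (r *\<^sub>R a) = r * f a \<and> f (-a) = - f a \<and> f 0 = 0"
  using assms by (simp add: linear_add linear_diff linear_scale linear_neg linear_0)

lemma ml:
  assumes "multilinear4 T"
  shows "T (a+b) y z u = T a y z u + T b y z u"
    "T x (a+b) z u = T x a z u + T x b z u"
    "T x y (a+b) u = T x y a u + T x y b u"
    "T x y z (a+b) = T x y z a + T x y z b"
    "T (a-b) y z u = T a y z u - T b y z u"
    "T x (a-b) z u = T x a z u - T x b z u"
    "T x y (a-b) u = T x y a u - T x y b u"
    "T x y z (a-b) = T x y z a - T x y z b"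
    "T (r *\<^sub>R a) y z u = r * T a y z u"
    "T x (r *\<^sub>R a) z u = r * T x a z u"
    "T x y (r *\<^sub>R a) u = r * T x y a u"
    "T x y z (r *\<^sub>R a) = r * T x y z a"
    "T (-a) y z u = - T a y z u"
    "T x (-a) z u = - T x a z u"
    "T x y (-a) u = - T x y a u"
    "T x y z (-a) = - T x y z a"
    "T 0 y z u = 0" "T x 0 z u = 0" "T x y 0 u = 0" "T x y z 0 = 0"
proof -
  have l1: "linear (\<lambda>x. T x y z u)" for y z u using assms unfolding multilinear4_def by auto
  have l2: "linear (\<lambda>y. T x y z u)" for x z u using assms unfolding multilinear4_def by auto
  have l3: "linear (\<lambda>z. T x y z u)" for x y u using assms unfolding multilinear4_def by auto
  have l4: "linear (\<lambda>u. T x y z u)" for x y z using assms unfolding multilinear4_def by auto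
  note r1 = lin_rules[OF l1] and r2 = lin_rules[OF l2] and r3 = lin_rules[OF l3] and r4 = lin_rules[OF l4]
  show "T (a+b) y z u = T a y z u + T b y z u"
    "T x (a+b) z u = T x a z u + T x b z u"
    "T x y (a+b) u = T x y a u + T x y b u"
    "T x y z (a+b) = T x y z a + T x y z b"
    "T (a-b) y z u = T a y z u - T b y z u"
    "T x (a-b) z u = T x a z u - T x b z u"
    "T x y (a-b) u = T x y a u - T x y b u"
    "T x y z (a-b) = T x y z a - T x y z b"
    "T (r *\<^sub>R a) y z u = r * T a y z u"
    "T x (r *\<^sub>R a) z u = r * T x a z u"
    "T x y (r *\<^sub>R a) u = r * T x y a u"
    "T x y z (r *\<^sub>R a) = r * T x y z a"
    "T (-a) y z u = - T a y z u"
    "T x (-a) z u = - T x a z u"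
    "T x y (-a) u = - T x y a u"
    "T x y z (-a) = - T x y z a"
    "T 0 y z u = 0" "T x 0 z u = 0" "T x y 0 u = 0" "T x y z 0 = 0"
    using r1 r2 r3 r4 by simp_all
qed

definition bil :: "('a::real_vector \<Rightarrow> 'a \<Rightarrow> real) \<Rightarrow> bool" where
  "bil S \<longleftrightarrow> (\<forall>z. linear (\<lambda>y. S y z)) \<and> (\<forall>y. linear (\<lambda>z. S y z))"

lemma bl:
  assumes "bil S"
  shows "S (a+b) z = S a z + S b z" "S y (a+b) = S y a + S y b"
    "S (a-b) z = S a z - S b z" "S y (a-b) = S y a - S y b"
    "S (r *\<^sub>R a) z = r * S a z" "S y (r *\<^sub>R a) = r * S y a"
    "S (-a) z = - S a z" "S y (-a) = - S y a" "S 0 z = 0" "S y 0 = 0"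
proof -
  have l1: "linear (\<lambda>x. S x z)" for z using assms unfolding bil_def by auto
  have l2: "linear (\<lambda>y. S x y)" for x using assms unfolding bil_def by auto
  note r1 = lin_rules[OF l1] and r2 = lin_rules[OF l2]
  show "S (a+b) z = S a z + S b z" "S y (a+b) = S y a + S y b"
    "S (a-b) z = S a z - S b z" "S y (a-b) = S y a - S y b"
    "S (r *\<^sub>R a) z = r * S a z" "S y (r *\<^sub>R a) = r * S y a"
    "S (-a) z = - S a z" "S y (-a) = - S y a" "S 0 z = 0" "S y 0 = 0"
    using r1 r2 by simp_all
qed

locale ah =
  fixes J :: "'a::euclidean_space \<Rightarrow> 'a"
  assumes ah: "almost_hermitian J"
begin

lemma J_lin: "linear J" using ah unfolding almost_hermitian_def by auto
lemma JJ[simp]: "J (J x) = - x" using ah unfolding almost_hermitian_def by auto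
lemma JJinner[simp]: "inner (J x) (J y) = inner x y" using ah unfolding almost_hermitian_def by auto
lemma J_add[simp]: "J (a + b) = J a + J b" by (rule linear_add[OF J_lin])
lemma J_diff[simp]: "J (a - b) = J a - J b" by (rule linear_diff[OF J_lin])
lemma J_scale[simp]: "J (r *\<^sub>R a) = r *\<^sub>R J a" by (rule linear_scale[OF J_lin])
lemma J_neg[simp]: "J (- a) = - J a" by (rule linear_neg[OF J_lin])
lemma J_zero[simp]: "J 0 = 0" by (rule linear_0[OF J_lin])
lemma inner_J_left: "inner (J x) y = - inner x (J y)"
proof -
  have "inner (J x) y = inner (J (J x)) (J y)" by (simp only: JJinner)
  thus ?thesis by simp
qed
lemma inner_J_self[simp]: "inner (J x) x = 0" "inner x (J x) = 0"
  using inner_J_left[of x x] by (auto simp: inner_commute)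
lemma norm_J[simp]: "norm (J x) = norm x"
  by (simp add: norm_eq_sqrt_inner)

end



lemma swap2: "(\<Sum>w\<in>V. \<Sum>e\<in>E. \<Sum>v\<in>W. f w e v) = (\<Sum>w\<in>V. \<Sum>v\<in>W. \<Sum>e\<in>E. f w e v)"
  by (rule sum.cong[OF refl], rule sum.swap)

lemma curvD:
  assumes "curvature_tensor D"
  shows "multilinear4 D" "D x y z u = - D y x z u" "D x y z u = - D x y u z"
    "D x y z u = D z u x y" "D x y z u + D y z x u + D z x y u = 0"
  using assms unfolding curvature_tensor_def by blast+

lemma bil_sum:
  assumes "bil B"
  shows "B (sum f A) q = (\<Sum>a\<in>A. B (f a) q)" "B p (sum f A) = (\<Sum>a\<in>A. B p (f a))"
proof -
  have l1: "linear (\<lambda>x. B x q)" and l2: "linear (\<lambda>y. B p y)" using assms unfolding bil_def by auto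
  show "B (sum f A) q = (\<Sum>a\<in>A. B (f a) q)" using linear_sum[OF l1, of f A] by simp
  show "B p (sum f A) = (\<Sum>a\<in>A. B p (f a))" using linear_sum[OF l2, of f A] by simp
qed

lemma curv_zero:
  assumes c: "curvature_tensor D" and h: "\<And>x y. D x y y x = 0"
  shows "D x y z u = 0"
proof -
  note M = ml[OF curvD(1)[OF c]]
  note cA = curvD(2)[OF c] and cB = curvD(3)[OF c] and cP = curvD(4)[OF c] and cBi = curvD(5)[OF c]
  have s1: "D a y z a = 0" for a y z
  proof -
    have "D a (y+z) (y+z) a = 0" by (rule h)
    hence "D a y y a + D a y z a + D a z y a + D a z z a = 0" by (simp add: M)
    moreover have "D a z y a = D a y z a" using cP[of a z y a] cA[of y a a z] cB[of a y a z] by linarith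
    ultimately show ?thesis using h[of a y] h[of a z] by linarith
  qed
  have s2: "D x y z u = - D x z y u" for x y z u
  proof -
    have "D (x+u) y z (x+u) = 0" by (rule s1)
    moreover have "D (x+u) y z (x+u) = D x y z x + D x y z u + D u y z x + D u y z u" by (simp add: M ac_simps)
    ultimately have "D x y z x + D x y z u + D u y z x + D u y z u = 0" by simp
    hence "D x y z u + D u y z x = 0" using s1[of x y z] s1[of u y z] by linarith
    moreover have "D u y z x = D x z y u" using cP[of u y z x] cA[of z x u y] cB[of x z u y] by linarith
    ultimately show ?thesis by linarith
  qed
  have "D y z x u = D x y z u" using s2[of y z x u] cA[of y x z u] by linarith
  moreover have "D z x y u = D x y z u" using cA[of z x y u] s2[of x z y u] by linarith
  ultimately show ?thesis using cBi[of x y z u] by linarith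
qed

definition aflat :: "('a::real_inner \<Rightarrow> 'a) \<Rightarrow> ('a \<Rightarrow> 'a \<Rightarrow> 'a \<Rightarrow> 'a \<Rightarrow> real) \<Rightarrow> bool" where
  "aflat J D \<longleftrightarrow> (\<forall>x y. inner x y = 0 \<longrightarrow> inner (J x) y = 0 \<longrightarrow> D x y y x = 0)"

lemma sum_decomp:
  fixes B :: "'a::euclidean_space \<Rightarrow> 'a \<Rightarrow> real"
  assumes fin: "finite V" and nv: "\<And>v. v\<in>V \<Longrightarrow> inner v v = 1"
    and ov: "\<And>v w. v\<in>V \<Longrightarrow> w\<in>V \<Longrightarrow> v \<noteq> w \<Longrightarrow> inner v w = 0"
    and bB: "bil B"
  shows "(\<Sum>e\<in>Basis. B e e) = (\<Sum>v\<in>V. B v v) +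
     (\<Sum>e\<in>Basis. B (e - (\<Sum>v\<in>V. inner e v *\<^sub>R v)) (e - (\<Sum>v\<in>V. inner e v *\<^sub>R v)))"
proof -
  define c where "c e = (\<Sum>v\<in>V. inner e v *\<^sub>R v)" for e
  define pr where "pr e = e - c e" for e
  have l1: "linear (\<lambda>x. B x q)" and l2: "linear (\<lambda>y. B p y)" for p q
    using bB unfolding bil_def by auto
  have cw: "c w = w" if "w \<in> V" for w
  proof -
    have "c w = inner w w *\<^sub>R w + (\<Sum>v\<in>V-{w}. inner w v *\<^sub>R v)"
      unfolding c_def using fin that by (simp add: sum.remove)
    also have "(\<Sum>v\<in>V-{w}. inner w v *\<^sub>R v) = 0"
      using ov that by (intro sum.neutral) auto
    finally show ?thesis using nv[OF that] by simp
  qed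
  have prw: "pr w = 0" if "w \<in> V" for w using cw[OF that] by (simp add: pr_def)
  have clin: "linear c"
    by (rule linearI) (simp_all add: c_def inner_add_left scaleR_add_left sum.distrib scaleR_sum_right)
  have prlin: "linear pr"
    by (rule linearI) (simp_all add: pr_def linear_add[OF clin] linear_scale[OF clin] algebra_simps)
  have e: "B e e = B (pr e) (pr e) + B (pr e) (c e) + B (c e) (pr e) + B (c e) (c e)" for e
  proof -
    have "B e e = B (pr e + c e) (pr e + c e)" by (simp add: pr_def)
    also have "\<dots> = B (pr e) (pr e) + B (pr e) (c e) + B (c e) (pr e) + B (c e) (c e)"
      by (simp add: bl[OF bB])
    finally show ?thesis .
  qed
  have s1: "(\<Sum>e\<in>Basis. B (pr e) (c e)) = 0"
  proof -
    have "(\<Sum>e\<in>Basis. B (pr e) (c e)) = (\<Sum>e\<in>Basis. \<Sum>v\<in>V. inner e v * B (pr e) v)"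
      unfolding c_def by (simp add: bil_sum[OF bB] bl[OF bB])
    also have "\<dots> = (\<Sum>v\<in>V. \<Sum>e\<in>Basis. inner e v * B (pr e) v)" by (rule sum.swap)
    also have "\<dots> = (\<Sum>v\<in>V. B (pr v) v)"
    proof (rule sum.cong[OF refl])
      fix v
      have "linear (\<lambda>e. B (pr e) v)" using linear_compose[OF prlin l1[of v]] by (simp add: o_def)
      thus "(\<Sum>e\<in>Basis. inner e v * B (pr e) v) = B (pr v) v" by (rule sum_inner_lin')
    qed
    also have "\<dots> = 0" by (simp add: prw bl[OF bB])
    finally show ?thesis .
  qed
  have s2: "(\<Sum>e\<in>Basis. B (c e) (pr e)) = 0"
  proof -
    have "(\<Sum>e\<in>Basis. B (c e) (pr e)) = (\<Sum>e\<in>Basis. \<Sum>v\<in>V. inner e v * B v (pr e))"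
      unfolding c_def by (simp add: bil_sum[OF bB] bl[OF bB])
    also have "\<dots> = (\<Sum>v\<in>V. \<Sum>e\<in>Basis. inner e v * B v (pr e))" by (rule sum.swap)
    also have "\<dots> = (\<Sum>v\<in>V. B v (pr v))"
    proof (rule sum.cong[OF refl])
      fix v
      have "linear (\<lambda>e. B v (pr e))" using linear_compose[OF prlin l2[of v]] by (simp add: o_def)
      thus "(\<Sum>e\<in>Basis. inner e v * B v (pr e)) = B v (pr v)" by (rule sum_inner_lin')
    qed
    also have "\<dots> = 0" by (simp add: prw bl[OF bB])
    finally show ?thesis .
  qed
  have s3: "(\<Sum>e\<in>Basis. B (c e) (c e)) = (\<Sum>v\<in>V. B v v)"
  proof -
    have "(\<Sum>e\<in>Basis. B (c e) (c e)) = (\<Sum>e\<in>Basis. \<Sum>w\<in>V. \<Sum>v\<in>V. inner e w * (inner e v * B v w))"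
      unfolding c_def by (simp add: bil_sum[OF bB] bl[OF bB] sum_distrib_left)
    also have "\<dots> = (\<Sum>w\<in>V. \<Sum>e\<in>Basis. \<Sum>v\<in>V. inner e w * (inner e v * B v w))" by (rule sum.swap)
    also have "\<dots> = (\<Sum>w\<in>V. \<Sum>v\<in>V. \<Sum>e\<in>Basis. inner e w * (inner e v * B v w))"
      by (rule swap2)
    also have "\<dots> = (\<Sum>w\<in>V. \<Sum>v\<in>V. inner w v * B v w)"
    proof (intro sum.cong[OF refl])
      fix w v
      have "linear (\<lambda>e. inner e v * B v w)"
        by (rule linearI) (simp_all add: inner_add_left distrib_right)
      thus "(\<Sum>e\<in>Basis. inner e w * (inner e v * B v w)) = inner w v * B v w"
        using sum_inner_lin'[of "\<lambda>e. inner e v * B v w" w] by simp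
    qed
    also have "\<dots> = (\<Sum>w\<in>V. B w w)"
    proof (rule sum.cong[OF refl])
      fix w assume w: "w \<in> V"
      have "(\<Sum>v\<in>V. inner w v * B v w) = inner w w * B w w + (\<Sum>v\<in>V-{w}. inner w v * B v w)"
        using fin w by (simp add: sum.remove)
      also have "(\<Sum>v\<in>V-{w}. inner w v * B v w) = 0" using ov w by (intro sum.neutral) auto
      finally show "(\<Sum>v\<in>V. inner w v * B v w) = B w w" using nv[OF w] by simp
    qed
    finally show ?thesis .
  qed
  have "(\<Sum>e\<in>Basis. B e e) = (\<Sum>e\<in>Basis. B (pr e) (pr e)) + (\<Sum>e\<in>Basis. B (pr e) (c e))
      + (\<Sum>e\<in>Basis. B (c e) (pr e)) + (\<Sum>e\<in>Basis. B (c e) (c e))"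
    by (subst sum.cong[OF refl e]) (simp add: sum.distrib)
  also have "\<dots> = (\<Sum>v\<in>V. B v v) + (\<Sum>e\<in>Basis. B (pr e) (pr e))" using s1 s2 s3 by simp
  finally show ?thesis unfolding pr_def c_def by simp
qed




lemma pr_orth:
  fixes e :: "'a::euclidean_space"
  assumes fin: "finite V" and nv: "\<And>v. v\<in>V \<Longrightarrow> inner v v = 1"
    and ov: "\<And>v w. v\<in>V \<Longrightarrow> w\<in>V \<Longrightarrow> v \<noteq> w \<Longrightarrow> inner v w = 0"
    and w: "w \<in> V"
  shows "inner (e - (\<Sum>v\<in>V. inner e v *\<^sub>R v)) w = 0"
proof -
  have "(\<Sum>v\<in>V. inner e v * inner v w) = inner e w * inner w w + (\<Sum>v\<in>V-{w}. inner e v * inner v w)"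
    using fin w by (simp add: sum.remove)
  also have "(\<Sum>v\<in>V-{w}. inner e v * inner v w) = 0" using ov w by (intro sum.neutral) (auto simp: inner_commute)
  finally show ?thesis using nv[OF w] by (simp add: inner_diff_left inner_sum_left)
qed

lemma curvZ:
  assumes c: "curvature_tensor D"
  shows "D a a p q = 0" "D p q a a = 0"
  using curvD(2)[OF c, of a a p q] curvD(3)[OF c, of p q a a] by linarith+

lemma bil_D14:
  assumes c: "curvature_tensor D"
  shows "bil (\<lambda>p q. D p a b q)"
  using curvD(1)[OF c] unfolding bil_def multilinear4_def by auto

lemma exp4:
  assumes m: "multilinear4 D"
  shows "D (x + t *\<^sub>R a) (y + t *\<^sub>R b) (y + t *\<^sub>R b) (x + t *\<^sub>R a) =
     D x y y x + t * (D a y y x + D x b y x + D x y b x + D x y y a)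
     + t^2 * (D a b y x + D a y b x + D a y y a + D x b b x + D x b y a + D x y b a)
     + t^3 * (D a b b x + D a b y a + D a y b a + D x b b a) + t^4 * D a b b a"
  by (simp add: ml[OF m] power2_eq_square power3_eq_cube power4_eq_xxxx algebra_simps)

context ah
begin

lemma P1:
  assumes c: "curvature_tensor D" and af: "aflat J D"
    and h: "inner w a = 0" "inner (J w) a = 0" "inner w b = 0" "inner (J w) b = 0"
  shows "D w a b w = 0"
proof -
  note M = ml[OF curvD(1)[OF c]]
  note cA = curvD(2)[OF c] and cB = curvD(3)[OF c] and cP = curvD(4)[OF c]
  have "D w (a+b) (a+b) w = 0" using af h unfolding aflat_def by (simp add: inner_add_right)
  moreover have "D w (a+b) (a+b) w = D w a a w + D w a b w + D w b a w + D w b b w"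
    by (simp add: M ac_simps)
  moreover have "D w a a w = 0" "D w b b w = 0" using af h unfolding aflat_def by auto
  moreover have "D w b a w = D w a b w" using cP[of w b a w] cA[of a w w b] cB[of w a w b] by linarith
  ultimately show ?thesis by linarith
qed

lemma P2:
  assumes c: "curvature_tensor D" and af: "aflat J D"
    and nx: "inner x x = 1" and ny: "inner y y = 1" and o1: "inner x y = 0" and o2: "inner (J x) y = 0"
  shows "D (J y) y y x + D x (J x) y x = 0"
proof -
  note M = ml[OF curvD(1)[OF c]]
  note cA = curvD(2)[OF c] and cB = curvD(3)[OF c] and cP = curvD(4)[OF c]
  have o3: "inner y x = 0" "inner y (J x) = 0" "inner x (J y) = 0" "inner (J y) x = 0"
    using o1 o2 inner_J_left[of x y] inner_J_left[of y x] by (auto simp: inner_commute)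
  have f: "D (x + t *\<^sub>R J y) (y + t *\<^sub>R J x) (y + t *\<^sub>R J x) (x + t *\<^sub>R J y) = 0" for t
  proof -
    have "inner (x + t *\<^sub>R J y) (y + t *\<^sub>R J x) = 0"
      using o1 o3 by (simp add: inner_add_left inner_add_right)
    moreover have "inner (J (x + t *\<^sub>R J y)) (y + t *\<^sub>R J x) = 0"
      using o1 o2 o3 nx ny by (simp add: inner_add_left inner_add_right inner_diff_left)
    ultimately show ?thesis using af unfolding aflat_def by blast
  qed
  define c1 where "c1 = D (J y) y y x + D x (J x) y x + D x y (J x) x + D x y y (J y)"
  define c2 where "c2 = D (J y) (J x) y x + D (J y) y (J x) x + D (J y) y y (J y) + D x (J x) (J x) x + D x (J x) y (J y) + D x y (J x) (J y)"
  define c3 where "c3 = D (J y) (J x) (J x) x + D (J y) (J x) y (J y) + D (J y) y (J x) (J y) + D x (J x) (J x) (J y)"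
  have c0: "D x y y x = 0" using af o1 o2 unfolding aflat_def by blast
  have c4: "D (J y) (J x) (J x) (J y) = 0" using af o1 o2 o3 unfolding aflat_def
    by (simp add: inner_J_left)
  have e: "c1 * t + c2 * t^2 + c3 * t^3 = 0" for t
    using f[of t] exp4[OF curvD(1)[OF c], of x t "J y" y "J x"] c0 c4
    unfolding c1_def c2_def c3_def by (simp add: algebra_simps)
  have "c1 = 0" using e[of 1] e[of "-1"] e[of 2] e[of "-2"] by simp
  moreover have "D x y y (J y) = D (J y) y y x" using cP[of x y y "J y"] cA[of y "J y" x y] cB[of "J y" y x y] by linarith
  moreover have "D x y (J x) x = D x (J x) y x" using cP[of x y "J x" x] cA[of "J x" x x y] cB[of x "J x" x y] by linarith
  ultimately show ?thesis unfolding c1_def by linarith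
qed

end



lemma neq_orth: "inner a b = 0 \<Longrightarrow> inner a a = 1 \<Longrightarrow> a \<noteq> b" by auto

context ah
begin

lemma Hzero:
  assumes c: "curvature_tensor D" and af: "aflat J D" and ric: "\<And>y z. ricci D y z = 0"
    and nx: "inner x x = 1"
  shows "D x (J x) (J x) x = 0"
proof -
  note cP = curvD(4)[OF c]
  have xJ: "x \<noteq> J x" using nx by (intro neq_orth) auto
  let ?V = "{x, J x}"
  have fin: "finite ?V" by simp
  have nv: "\<And>v. v\<in>?V \<Longrightarrow> inner v v = 1" using nx by auto
  have ov: "\<And>v w. v\<in>?V \<Longrightarrow> w\<in>?V \<Longrightarrow> v \<noteq> w \<Longrightarrow> inner v w = 0" by auto
  have "ricci D x x = (\<Sum>v\<in>?V. D v x x v) +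
     (\<Sum>e\<in>Basis. D (e - (\<Sum>v\<in>?V. inner e v *\<^sub>R v)) x x (e - (\<Sum>v\<in>?V. inner e v *\<^sub>R v)))"
    unfolding ricci_def using sum_decomp[OF fin nv ov bil_D14[OF c, of x x]] by simp
  also have "(\<Sum>e\<in>Basis. D (e - (\<Sum>v\<in>?V. inner e v *\<^sub>R v)) x x (e - (\<Sum>v\<in>?V. inner e v *\<^sub>R v))) = 0"
  proof (rule sum.neutral, rule ballI)
    fix e
    let ?p = "e - (\<Sum>v\<in>?V. inner e v *\<^sub>R v)"
    have o1: "inner ?p x = 0" using pr_orth[OF fin nv ov, of x e] by simp
    have o2: "inner ?p (J x) = 0" using pr_orth[OF fin nv ov, of "J x" e] by simp
    have o3: "inner (J ?p) x = 0" using o2 inner_J_left[of ?p x] by linarith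
    show "D ?p x x ?p = 0" by (rule P1[OF c af o1 o3 o1 o3])
  qed
  finally have "0 = (\<Sum>v\<in>?V. D v x x v)" using ric by simp
  also have "\<dots> = D x x x x + D (J x) x x (J x)" using xJ by simp
  also have "\<dots> = D x (J x) (J x) x" using curvZ[OF c, of x x x] cP[of "J x" x x "J x"] by simp
  finally show ?thesis by simp
qed

lemma Mzero:
  assumes c: "curvature_tensor D" and rk: "RK_cond J D" and af: "aflat J D" and ric: "\<And>y z. ricci D y z = 0"
    and nx: "inner x x = 1" and ny: "inner y y = 1" and o1: "inner x y = 0" and o2: "inner (J x) y = 0"
  shows "D x (J x) y x = 0"
proof -
  note M = ml[OF curvD(1)[OF c]]
  note cP = curvD(4)[OF c]
  have o3: "inner y x = 0" "inner y (J x) = 0" "inner x (J y) = 0" "inner (J y) x = 0"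
    using o1 o2 inner_J_left[of x y] inner_J_left[of y x] by (auto simp: inner_commute)
  have o4: "inner (J x) (J y) = 0" "inner (J y) (J x) = 0" using o1 o3 by auto
  have d: "x \<noteq> J x" "x \<noteq> y" "x \<noteq> J y" "J x \<noteq> y" "J x \<noteq> J y" "y \<noteq> J y"
    using neq_orth[of x "J x"] neq_orth[of x y] neq_orth[of x "J y"] neq_orth[of "J x" y]
      neq_orth[of "J x" "J y"] neq_orth[of y "J y"] nx ny o1 o2 o3 o4 by auto
  let ?V = "{x, J x, y, J y}"
  have fin: "finite ?V" by simp
  have nv: "\<And>v. v\<in>?V \<Longrightarrow> inner v v = 1" using nx ny by auto
  have ov: "\<And>v w. v\<in>?V \<Longrightarrow> w\<in>?V \<Longrightarrow> v \<noteq> w \<Longrightarrow> inner v w = 0"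
    using o1 o2 o3 o4 by auto
  have "ricci D (J x) y = (\<Sum>v\<in>?V. D v (J x) y v) +
     (\<Sum>e\<in>Basis. D (e - (\<Sum>v\<in>?V. inner e v *\<^sub>R v)) (J x) y (e - (\<Sum>v\<in>?V. inner e v *\<^sub>R v)))"
    unfolding ricci_def using sum_decomp[OF fin nv ov bil_D14[OF c, of "J x" y]] by simp
  also have "(\<Sum>e\<in>Basis. D (e - (\<Sum>v\<in>?V. inner e v *\<^sub>R v)) (J x) y (e - (\<Sum>v\<in>?V. inner e v *\<^sub>R v))) = 0"
  proof (rule sum.neutral, rule ballI)
    fix e
    let ?p = "e - (\<Sum>v\<in>?V. inner e v *\<^sub>R v)"
    have p1: "inner ?p x = 0" using pr_orth[OF fin nv ov, of "x" e] by simp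
    have p2: "inner ?p (J x) = 0" using pr_orth[OF fin nv ov, of "J x" e] by simp
    have p3: "inner ?p y = 0" using pr_orth[OF fin nv ov, of "y" e] by simp
    have p4: "inner ?p (J y) = 0" using pr_orth[OF fin nv ov, of "J y" e] by simp
    have q2: "inner (J ?p) (J x) = 0" using p1 JJinner[of ?p x] by linarith
    have q3: "inner (J ?p) y = 0" using p4 inner_J_left[of ?p y] by linarith
    show "D ?p (J x) y ?p = 0" by (rule P1[OF c af p2 q2 p3 q3])
  qed
  finally have "0 = (\<Sum>v\<in>?V. D v (J x) y v)" using ric by simp
  also have "\<dots> = D x (J x) y x + D (J x) (J x) y (J x) + D y (J x) y y + D (J y) (J x) y (J y)"
    using d by (simp add: ac_simps)
  also have "\<dots> = D x (J x) y x - D (J y) y y x"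
  proof -
    have "D (J y) (J x) y (J y) = D (J (J y)) (J (J x)) (J y) (J (J y))"
      using rk unfolding RK_cond_def by blast
    also have "\<dots> = - D y x (J y) y" by (simp add: M)
    also have "\<dots> = - D (J y) y y x" using cP[of y x "J y" y] by simp
    finally show ?thesis using curvZ[OF c, of "J x" y "J x"] curvZ[OF c, of y "J x" y] by simp
  qed
  finally have "D x (J x) y x = D (J y) y y x" by simp
  with P2[OF c af nx ny o1 o2] show ?thesis by simp
qed

lemma key:
  assumes c: "curvature_tensor D" and rk: "RK_cond J D" and af: "aflat J D" and ric: "\<And>y z. ricci D y z = 0"
  shows "D x y y x = 0"
proof (cases "x = 0")
  case True
  then show ?thesis using ml(17)[OF curvD(1)[OF c]] by simp
next
  case False
  note M = ml[OF curvD(1)[OF c]]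
  note cA = curvD(2)[OF c] and cB = curvD(3)[OF c] and cP = curvD(4)[OF c]
  define x1 where "x1 = (1 / norm x) *\<^sub>R x"
  have nx: "inner x1 x1 = 1" using False by (simp add: x1_def dot_square_norm power2_eq_square)
  have xx: "x = norm x *\<^sub>R x1" using False by (simp add: x1_def)
  define a where "a = inner y x1"
  define b where "b = inner y (J x1)"
  define y' where "y' = y - a *\<^sub>R x1 - b *\<^sub>R J x1"
  have yy: "y = y' + a *\<^sub>R x1 + b *\<^sub>R J x1" by (simp add: y'_def)
  have oy1: "inner x1 y' = 0" using nx
    by (simp add: y'_def a_def b_def inner_diff_right inner_commute)
  have oy2: "inner (J x1) y' = 0" using nx
    by (simp add: y'_def a_def b_def inner_diff_right inner_commute)
  have oy3: "inner (J x1) x1 = 0" by simp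
  have z1: "D x1 y' y' x1 = 0" using af oy1 oy2 unfolding aflat_def by blast
  have z2: "D x1 (J x1) (J x1) x1 = 0" by (rule Hzero[OF c af ric nx])
  have z3: "D x1 (J x1) y' x1 = 0"
  proof (cases "y' = 0")
    case True then show ?thesis by (simp add: M)
  next
    case False
    define y1 where "y1 = (1 / norm y') *\<^sub>R y'"
    have ny: "inner y1 y1 = 1" using False by (simp add: y1_def dot_square_norm power2_eq_square)
    have yy1: "y' = norm y' *\<^sub>R y1" using False by (simp add: y1_def)
    have "inner x1 y1 = 0" "inner (J x1) y1 = 0" using oy1 oy2 by (simp_all add: y1_def)
    from Mzero[OF c rk af ric nx ny this] have "D x1 (J x1) y1 x1 = 0" .
    then show ?thesis by (subst yy1) (simp add: M)
  qed
  have z4: "D x1 y' (J x1) x1 = D x1 (J x1) y' x1"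
    using cP[of x1 y' "J x1" x1] cA[of "J x1" x1 x1 y'] cB[of x1 "J x1" x1 y'] by linarith
  have "D x1 y y x1 = 0"
    unfolding yy by (simp add: M curvZ[OF c] z1 z2 z3 z4)
  then have "D (norm x *\<^sub>R x1) y y (norm x *\<^sub>R x1) = 0" by (simp add: M)
  then show ?thesis by (simp only: xx[symmetric])
qed

end



locale ahS = ah J for J :: "'a::euclidean_space \<Rightarrow> 'a" +
  fixes S :: "'a \<Rightarrow> 'a \<Rightarrow> real"
  assumes bS: "bil S" and sS: "S a b = S b a" and jS: "S (J a) (J b) = S a b"
begin

lemmas SB = bl[OF bS]

lemma S_aJ: "S a (J b) = - S (J a) b"
proof -
  have "S (J a) b = S (J (J a)) (J b)" by (simp only: jS)
  thus ?thesis by (simp add: SB)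
qed

lemma S_anti: "S (J a) b = - S (J b) a"
  using S_aJ[of b a] sS[of b "J a"] sS[of "J b" a] by simp

lemma S_Jself: "S (J a) a = 0" using S_anti[of a a] by simp

lemma inner_aJ: "inner a (J b) = - inner (J a) b" using inner_J_left[of a b] by simp

lemma inner_anti: "inner (J a) b = - inner (J b) a"
  using inner_J_left[of a b] by (simp add: inner_commute)

lemma lin_S2: "linear (\<lambda>e. S a e)" using bS unfolding bil_def by auto
lemma lin_S1: "linear (\<lambda>e. S e b)" using bS unfolding bil_def by auto
lemma lin_SJ1: "linear (\<lambda>e. S (J e) b)"
  using linear_compose[OF J_lin lin_S1[of b]] by (simp add: o_def)

lemma tr1: "(\<Sum>e\<in>Basis. inner e a * S b e) = S b a" by (rule sum_inner_lin'[OF lin_S2])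
lemma tr2: "(\<Sum>e\<in>Basis. inner e a * S e b) = S a b" by (rule sum_inner_lin'[OF lin_S1])
lemma tr3: "(\<Sum>e\<in>Basis. inner e a * S (J e) b) = S (J a) b" by (rule sum_inner_lin'[OF lin_SJ1])

lemma psi_multi: "multilinear4 (psi J S)"
  unfolding multilinear4_def psi_def
  by (intro conjI allI linearI)
     (simp_all add: SB inner_add_left inner_add_right algebra_simps)

lemma psi_ric: "(\<Sum>e\<in>Basis. psi J S e y z e) = 6 * S y z"
proof -
  have pt: "psi J S e y z e = inner e (J z) * S (J y) e + 2 * (inner e (J y) * S (J z) e)
     - inner e (J y) * S (J e) z - 2 * (inner e (J z) * S (J e) y)" for e
    unfolding psi_def using S_Jself[of e] inner_J_left[of e z] inner_J_left[of e y]
      inner_commute[of "J y" e] inner_commute[of "J z" e]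
    by (simp add: algebra_simps)
  have "(\<Sum>e\<in>Basis. psi J S e y z e) = S (J y) (J z) + 2 * S (J z) (J y) - S (J (J y)) z - 2 * S (J (J z)) y"
    by (simp add: pt sum.distrib sum_subtractf sum_distrib_left[symmetric] tr1 tr3)
  also have "\<dots> = 6 * S y z" by (simp add: jS SB sS[of z y])
  finally show ?thesis .
qed

lemma psi_syms:
  "psi J S x y z u = - psi J S y x z u"
  "psi J S x y z u = - psi J S x y u z"
  "psi J S x y z u = psi J S z u x y"
  "psi J S x y z u + psi J S y z x u + psi J S z x y u = 0"
  unfolding psi_def
  using inner_anti[of y x] inner_anti[of z x] inner_anti[of u x] inner_anti[of z y]
    inner_anti[of u y] inner_anti[of u z]
    S_anti[of y x] S_anti[of z x] S_anti[of u x] S_anti[of z y] S_anti[of u y] S_anti[of u z]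
  by (simp_all add: algebra_simps)

lemma psi_curv: "curvature_tensor (psi J S)"
  unfolding curvature_tensor_def using psi_multi psi_syms by blast

lemma psi_RK: "RK_cond J (psi J S)"
  unfolding RK_cond_def psi_def by (simp add: jS SB inner_aJ S_aJ)

lemma psi_sec: "inner x y = 0 \<Longrightarrow> inner (J x) y = 0 \<Longrightarrow> psi J S x y y x = 0"
  unfolding psi_def using inner_anti[of y x] by simp

lemma psi_rp: "(\<Sum>e\<in>Basis. psi J S e y (J z) (J e)) =
    (\<Sum>e\<in>Basis. S e e) * inner y z + (real DIM('a) + 2) * S y z"
proof -
  have pt: "psi J S e y (J z) (J e) = inner y z * S e e - inner e z * S y e
     + 2 * (inner e (J y) * S (J z) e) + inner e e * S y z - inner e y * S e z
     - 2 * (inner e (J z) * S (J e) y)" for e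
    unfolding psi_def using inner_J_left[of e y] inner_J_left[of e z] inner_J_left[of z e] inner_commute[of z "J e"]
      inner_commute[of y e] S_aJ[of z e] S_aJ[of "J e" z]
    by (simp add: jS SB algebra_simps)
  have ee: "(\<Sum>e\<in>(Basis::'a set). inner e e * S y z) = real DIM('a) * S y z"
    by (simp add: inner_Basis)
  have "(\<Sum>e\<in>Basis. psi J S e y (J z) (J e)) = (\<Sum>e\<in>Basis. S e e) * inner y z - S y z
      + 2 * S (J z) (J y) + real DIM('a) * S y z - S y z - 2 * S (J (J z)) y"
    by (simp add: pt sum.distrib sum_subtractf sum_distrib_left[symmetric] sum_distrib_right[symmetric]
       tr1 tr2 tr3 ee mult.commute[of "inner y z"] inner_commute[of y])
  also have "\<dots> = (\<Sum>e\<in>Basis. S e e) * inner y z + (real DIM('a) + 2) * S y z"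
    by (simp add: jS SB sS[of z y] algebra_simps)
  finally show ?thesis .
qed

end



lemma bil_inner: "bil (inner :: 'a::real_inner \<Rightarrow> 'a \<Rightarrow> real)"
  unfolding bil_def by (auto intro!: linearI simp: inner_add_left inner_add_right)

lemma comb4_curv:
  assumes "curvature_tensor A" "curvature_tensor B" "curvature_tensor C" "curvature_tensor E"
  shows "curvature_tensor (\<lambda>x y z u. a * A x y z u + b * B x y z u + c * C x y z u + d * E x y z u)"
proof -
  note MA = ml[OF curvD(1)[OF assms(1)]] and MB = ml[OF curvD(1)[OF assms(2)]]
    and MC = ml[OF curvD(1)[OF assms(3)]] and ME = ml[OF curvD(1)[OF assms(4)]]
  have m: "multilinear4 (\<lambda>x y z u. a * A x y z u + b * B x y z u + c * C x y z u + d * E x y z u)"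
    unfolding multilinear4_def
    by (intro conjI allI linearI) (simp_all add: MA MB MC ME algebra_simps)
  let ?T = "\<lambda>x y z u. a * A x y z u + b * B x y z u + c * C x y z u + d * E x y z u"
  have s1: "?T x y z u = - ?T y x z u" for x y z u
    by (simp only: curvD(2)[OF assms(1), of x y z u] curvD(2)[OF assms(2), of x y z u]
      curvD(2)[OF assms(3), of x y z u] curvD(2)[OF assms(4), of x y z u]; simp add: algebra_simps)
  have s2: "?T x y z u = - ?T x y u z" for x y z u
    by (simp only: curvD(3)[OF assms(1), of x y z u] curvD(3)[OF assms(2), of x y z u]
      curvD(3)[OF assms(3), of x y z u] curvD(3)[OF assms(4), of x y z u]; simp add: algebra_simps)
  have s3: "?T x y z u = ?T z u x y" for x y z u
    by (simp only: curvD(4)[OF assms(1), of x y z u] curvD(4)[OF assms(2), of x y z u]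
      curvD(4)[OF assms(3), of x y z u] curvD(4)[OF assms(4), of x y z u])
  have s4: "?T x y z u + ?T y z x u + ?T z x y u = 0" for x y z u
  proof -
    have "?T x y z u + ?T y z x u + ?T z x y u = a * (A x y z u + A y z x u + A z x y u)
      + b * (B x y z u + B y z x u + B z x y u) + c * (C x y z u + C y z x u + C z x y u)
      + d * (E x y z u + E y z x u + E z x y u)" by (simp add: algebra_simps)
    also have "\<dots> = 0" using curvD(5)[OF assms(1)] curvD(5)[OF assms(2)] curvD(5)[OF assms(3)]
      curvD(5)[OF assms(4)] by simp
    finally show ?thesis .
  qed
  show ?thesis unfolding curvature_tensor_def using m s1 s2 s3 s4 by blast
qed

lemma comb4_ricci:
  "ricci (\<lambda>x y z u. a * A x y z u + b * B x y z u + c * C x y z u + d * E x y z u) y z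
   = a * ricci A y z + b * ricci B y z + c * ricci C y z + d * ricci E y z"
  unfolding ricci_def by (simp add: sum.distrib sum_distrib_left)

lemma R1_curv: "curvature_tensor (R1 :: 'a::real_inner \<Rightarrow> _)"
proof -
  have m: "multilinear4 (R1 :: 'a \<Rightarrow> _)"
    unfolding multilinear4_def R1_def
    by (intro conjI allI linearI) (simp_all add: inner_add_left inner_add_right algebra_simps)
  show ?thesis unfolding curvature_tensor_def using m
    by (simp add: R1_def inner_commute algebra_simps)
qed

lemma R1_ricci: "ricci R1 y (z::'a::euclidean_space) = (real DIM('a) - 1) * inner y z"
proof -
  have "ricci R1 y z = (\<Sum>e\<in>(Basis::'a set). inner e e * inner y z) - (\<Sum>e\<in>Basis. inner e z * inner y e)"
    unfolding ricci_def R1_def by (simp add: sum_subtractf algebra_simps)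
  also have "(\<Sum>e\<in>Basis. inner e z * inner y e) = inner y z"
    by (rule sum_inner_lin') (auto intro!: linearI simp: inner_add_right)
  finally show ?thesis by (simp add: inner_Basis algebra_simps)
qed

context ah
begin

lemma trJ:
  assumes bB: "bil B"
  shows "(\<Sum>e\<in>Basis. B (J e) (J e)) = (\<Sum>e\<in>Basis. B e e)"
proof -
  have l1: "linear (\<lambda>x. B x q)" and l2: "linear (\<lambda>y. B p y)" for p q
    using bB unfolding bil_def by auto
  have lJ: "linear (\<lambda>e. B (J e) f)" for f
    using linear_compose[OF J_lin l1[of f]] by (simp add: o_def)
  have "(\<Sum>e\<in>Basis. B (J e) (J e)) = (\<Sum>e\<in>Basis. \<Sum>f\<in>Basis. inner (J e) f * B (J e) f)"
    by (rule sum.cong[OF refl]) (rule sum_inner_lin[OF l2, symmetric])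
  also have "\<dots> = (\<Sum>f\<in>Basis. \<Sum>e\<in>Basis. inner (J e) f * B (J e) f)" by (rule sum.swap)
  also have "\<dots> = (\<Sum>f\<in>Basis. \<Sum>e\<in>Basis. - (inner e (J f) * B (J e) f))"
    by (simp add: inner_J_left)
  also have "\<dots> = (\<Sum>f\<in>Basis. - B (J (J f)) f)"
    by (simp add: sum_negf sum_inner_lin'[OF lJ])
  also have "\<dots> = (\<Sum>f\<in>Basis. B f f)" by (simp add: bl[OF bB])
  finally show ?thesis .
qed

lemma ahS_inner: "ahS J inner"
  by (unfold_locales) (auto simp: bil_inner inner_commute)

lemma ricci_ahS:
  assumes c: "curvature_tensor R" and rk: "RK_cond J R"
  shows "ahS J (ricci R)"
proof -
  note M = ml[OF curvD(1)[OF c]]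
  note cA = curvD(2)[OF c] and cB = curvD(3)[OF c] and cP = curvD(4)[OF c]
  have b: "bil (ricci R)"
    unfolding bil_def ricci_def
    by (intro conjI allI linearI) (simp_all add: M sum.distrib sum_distrib_left)
  have s: "ricci R a b = ricci R b a" for a b
    unfolding ricci_def
  proof (rule sum.cong[OF refl])
    fix e show "R e a b e = R e b a e" using cP[of e a b e] cA[of b e e a] cB[of e b e a] by linarith
  qed
  have j: "ricci R (J a) (J b) = ricci R a b" for a b
  proof -
    have "ricci R (J a) (J b) = (\<Sum>e\<in>Basis. R (J e) (J (J a)) (J (J b)) (J e))"
      unfolding ricci_def
    proof (rule sum.cong[OF refl])
      fix e show "R e (J a) (J b) e = R (J e) (J (J a)) (J (J b)) (J e)"
        using rk unfolding RK_cond_def by blast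
    qed
    also have "\<dots> = (\<Sum>e\<in>Basis. R (J e) a b (J e))" by (simp add: M)
    also have "\<dots> = ricci R a b" unfolding ricci_def by (rule trJ[OF bil_D14[OF c]])
    finally show ?thesis .
  qed
  show ?thesis by unfold_locales (use b s j in auto)
qed

lemma R2_psi: "R2 J x y z u = psi J inner x y z u / 2"
  unfolding R2_def psi_def by (simp add: inner_commute algebra_simps)

lemma R1_RK: "RK_cond J R1" unfolding RK_cond_def R1_def by simp

lemma R1_rp: "(\<Sum>e\<in>Basis. R1 e y (J z) (J e)) = inner y z"
proof -
  have "(\<Sum>e\<in>Basis. R1 e y (J z) (J e)) = (\<Sum>e\<in>Basis. inner e (J z) * inner (J y) e)"
    unfolding R1_def
  proof (rule sum.cong[OF refl])
    fix e show "inner y (J z) * inner e (J e) - inner e (J z) * inner y (J e) = inner e (J z) * inner (J y) e"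
      using inner_J_left[of y e] by simp
  qed
  also have "\<dots> = inner (J y) (J z)"
    by (rule sum_inner_lin') (auto intro!: linearI simp: inner_add_right)
  finally show ?thesis by simp
qed

end



context ah
begin

lemma sec_scale:
  assumes an: "const_antihol_curv J R \<nu>" and c: "curvature_tensor R"
    and o1: "inner x y = 0" and o2: "inner (J x) y = 0"
  shows "R x y y x = \<nu> * (inner x x * inner y y)"
proof (cases "x = 0 \<or> y = 0")
  case True
  then show ?thesis using ml[OF curvD(1)[OF c]] by auto
next
  case False
  note M = ml[OF curvD(1)[OF c]]
  define x1 where "x1 = (1 / norm x) *\<^sub>R x"
  define y1 where "y1 = (1 / norm y) *\<^sub>R y"
  have xx: "x = norm x *\<^sub>R x1" using False by (simp add: x1_def)
  have yy: "y = norm y *\<^sub>R y1" using False by (simp add: y1_def)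
  have "antiholomorphic_pair J x1 y1"
    unfolding antiholomorphic_pair_def using False o1 o2 inner_J_left[of y x]
    by (simp add: x1_def y1_def inner_commute)
  hence r: "R x1 y1 y1 x1 = \<nu>" using an unfolding const_antihol_curv_def by blast
  have "R (norm x *\<^sub>R x1) (norm y *\<^sub>R y1) (norm y *\<^sub>R y1) (norm x *\<^sub>R x1) = \<nu> * ((norm x)^2 * (norm y)^2)"
    by (simp add: M r power2_eq_square)
  then show ?thesis by (simp only: xx[symmetric] yy[symmetric] dot_square_norm)
qed

lemma main:
  fixes R :: "'a \<Rightarrow> 'a \<Rightarrow> 'a \<Rightarrow> 'a \<Rightarrow> real" and n :: nat
  assumes c: "curvature_tensor R" and rk: "RK_cond J R" and an: "const_antihol_curv J R \<nu>"
    and dim: "DIM('a) = 2 * n" and n2: "n \<ge> 2"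
  shows "(\<forall>x y z u. R x y z u =
         1/6 * psi J (ricci R) x y z u + \<nu> * R1 x y z u
         - (2 * real n - 1) / 3 * \<nu> * R2 J x y z u)
   \<and> (\<forall>y z. 3 * ricci (Rprime J R) y z - (real n + 1) * ricci R y z
         = 1 / (2 * real n) * (3 * scal (Rprime J R) - (real n + 1) * scal R) * inner y z)
   \<and> \<nu> = ((2 * real n + 1) * scal R - 3 * scal (Rprime J R))
             / (8 * real n * ((real n)^2 - 1))"
proof -
  interpret S: ahS J "ricci R" by (rule ricci_ahS[OF c rk])
  interpret G: ahS J inner by (rule ahS_inner)
  define S where "S = ricci R"
  define k where "k = (2 * real n - 1) / 3 * \<nu>"
  define D where "D = (\<lambda>x y z u. 1 * R x y z u + (-1/6) * psi J S x y z u + (- \<nu>) * R1 x y z u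
      + (k/2) * psi J inner x y z u)"
  have Dc: "curvature_tensor D" unfolding D_def S_def
    by (rule comb4_curv[OF c S.psi_curv R1_curv G.psi_curv])
  have Drk: "RK_cond J D" unfolding RK_cond_def
  proof (intro allI)
    fix x y z u
    have "R x y z u = R (J x) (J y) (J z) (J u)" using rk unfolding RK_cond_def by blast
    moreover have "psi J S x y z u = psi J S (J x) (J y) (J z) (J u)"
      using S.psi_RK unfolding RK_cond_def S_def by blast
    moreover have "psi J inner x y z u = psi J inner (J x) (J y) (J z) (J u)"
      using G.psi_RK unfolding RK_cond_def by blast
    moreover have "R1 x y z u = R1 (J x) (J y) (J z) (J u)"
      using R1_RK unfolding RK_cond_def by blast
    ultimately show "D x y z u = D (J x) (J y) (J z) (J u)" unfolding D_def by simp
  qed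
  have ricg: "ricci (psi J inner) y z = 6 * inner y z" for y z
    unfolding ricci_def by (rule G.psi_ric)
  have ricS: "ricci (psi J S) y z = 6 * S y z" for y z
    using S.psi_ric[of y z] ricci_def[of "psi J (ricci R)" y z] unfolding S_def by simp
  have Dric: "ricci D y z = 0" for y z
    unfolding D_def comb4_ricci ricg ricS R1_ricci dim
    by (simp add: S_def k_def algebra_simps) (simp add: field_simps)
  have Daf: "aflat J D" unfolding aflat_def
  proof (intro allI impI)
    fix x y assume o1: "inner x y = 0" and o2: "inner (J x) y = 0"
    have "R x y y x = \<nu> * (inner x x * inner y y)" by (rule sec_scale[OF an c o1 o2])
    moreover have "psi J S x y y x = 0" unfolding S_def by (rule S.psi_sec[OF o1 o2])
    moreover have "psi J inner x y y x = 0" by (rule G.psi_sec[OF o1 o2])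
    ultimately show "D x y y x = 0" unfolding D_def R1_def using o1 by (simp add: inner_commute)
  qed
  have Dz: "D x y z u = 0" for x y z u
    by (rule curv_zero[OF Dc key[OF Dc Drk Daf Dric]])
  have P: "R x y z u = 1/6 * psi J S x y z u + \<nu> * R1 x y z u - k/2 * psi J inner x y z u" for x y z u
    using Dz[of x y z u] unfolding D_def by simp
  have part1: "\<forall>x y z u. R x y z u =
         1/6 * psi J (ricci R) x y z u + \<nu> * R1 x y z u
         - (2 * real n - 1) / 3 * \<nu> * R2 J x y z u"
    using P by (simp add: R2_psi S_def k_def)
  define \<tau> where "\<tau> = scal R"
  have tau: "(\<Sum>e\<in>Basis. S e e) = \<tau>" unfolding \<tau>_def scal_def S_def ..
  have ee: "(\<Sum>e\<in>(Basis::'a set). inner e e) = 2 * real n" by (simp add: inner_Basis dim)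
  have Sp: "ricci (Rprime J R) y z = 1/6 * (\<tau> * inner y z + (2 * real n + 2) * S y z) + \<nu> * inner y z
      - k/2 * ((4 * real n + 2) * inner y z)" for y z
  proof -
    have "ricci (Rprime J R) y z = (\<Sum>e\<in>Basis. 1/6 * psi J S e y (J z) (J e) + \<nu> * R1 e y (J z) (J e)
       - k/2 * psi J inner e y (J z) (J e))"
      unfolding ricci_def Rprime_def by (rule sum.cong[OF refl]) (rule P)
    also have "\<dots> = 1/6 * (\<Sum>e\<in>Basis. psi J S e y (J z) (J e)) + \<nu> * (\<Sum>e\<in>Basis. R1 e y (J z) (J e))
       - k/2 * (\<Sum>e\<in>Basis. psi J inner e y (J z) (J e))"
      by (simp add: sum.distrib sum_subtractf sum_distrib_left)
    also have "\<dots> = 1/6 * (\<tau> * inner y z + (2 * real n + 2) * S y z) + \<nu> * inner y z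
      - k/2 * ((4 * real n + 2) * inner y z)"
      unfolding S.psi_rp[folded S_def] G.psi_rp R1_rp tau ee dim by (simp add: algebra_simps)
    finally show ?thesis .
  qed
  have taup: "scal (Rprime J R) = (\<tau>/6 + \<nu> - k/2*(4 * real n + 2)) * (2 * real n) + (2 * real n + 2)/6 * \<tau>"
  proof -
    have "scal (Rprime J R) = (\<Sum>e\<in>(Basis::'a set). (\<tau>/6 + \<nu> - k/2*(4 * real n + 2)) * inner e e
       + (2 * real n + 2)/6 * S e e)"
      unfolding scal_def by (rule sum.cong[OF refl]) (simp add: Sp algebra_simps)
    also have "\<dots> = (\<tau>/6 + \<nu> - k/2*(4 * real n + 2)) * (\<Sum>e\<in>(Basis::'a set). inner e e)
       + (2 * real n + 2)/6 * (\<Sum>e\<in>Basis. S e e)"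
      by (simp only: sum.distrib sum_distrib_left)
    finally show ?thesis unfolding ee tau .
  qed
  have nr: "real n \<ge> 2" using n2 by simp
  have part2: "\<forall>y z. 3 * ricci (Rprime J R) y z - (real n + 1) * ricci R y z
         = 1 / (2 * real n) * (3 * scal (Rprime J R) - (real n + 1) * scal R) * inner y z"
  proof (intro allI)
    fix y z
    show "3 * ricci (Rprime J R) y z - (real n + 1) * ricci R y z
         = 1 / (2 * real n) * (3 * scal (Rprime J R) - (real n + 1) * scal R) * inner y z"
      unfolding Sp taup \<tau>_def[symmetric] S_def[symmetric] k_def using nr
      by (simp add: field_simps)
  qed
  have part3: "\<nu> = ((2 * real n + 1) * scal R - 3 * scal (Rprime J R)) / (8 * real n * ((real n)^2 - 1))"
  proof -
    have "real n * real n \<ge> 2 * 2" using mult_mono[OF nr nr] by simp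
    hence pos: "8 * real n * ((real n)^2 - 1) \<noteq> 0" using nr by (simp add: power2_eq_square)
    have "(2 * real n + 1) * scal R - 3 * scal (Rprime J R) = \<nu> * (8 * real n * ((real n)^2 - 1))"
      unfolding taup \<tau>_def[symmetric] k_def by (simp add: field_simps power2_eq_square)
    thus ?thesis using pos by (simp add: field_simps)
  qed
  show ?thesis using part1 part2 part3 by blast
qed

end

theorem proposition1:
  fixes M :: "'m set"
    and R :: "'m \<Rightarrow> 'a::euclidean_space \<Rightarrow> 'a \<Rightarrow> 'a \<Rightarrow> 'a \<Rightarrow> real"
    and J :: "'m \<Rightarrow> 'a \<Rightarrow> 'a"
    and \<nu> :: "'m \<Rightarrow> real"
    and n :: nat
  assumes dim: "DIM('a) = 2 * n" and n2: "n \<ge> 2"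
    and curv: "\<And>p. p \<in> M \<Longrightarrow> curvature_tensor (R p)"
    and herm: "\<And>p. p \<in> M \<Longrightarrow> almost_hermitian (J p)"
    and RK: "\<And>p. p \<in> M \<Longrightarrow> RK_cond (J p) (R p)"
    and antihol: "\<And>p. p \<in> M \<Longrightarrow> const_antihol_curv (J p) (R p) (\<nu> p)"
  shows "\<forall>p\<in>M.
     (\<forall>x y z u. R p x y z u =
         1/6 * psi (J p) (ricci (R p)) x y z u + \<nu> p * R1 x y z u
         - (2 * real n - 1) / 3 * \<nu> p * R2 (J p) x y z u)
   \<and> (\<forall>y z. 3 * ricci (Rprime (J p) (R p)) y z - (real n + 1) * ricci (R p) y z
         = 1 / (2 * real n) * (3 * scal (Rprime (J p) (R p)) - (real n + 1) * scal (R p)) * inner y z)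
   \<and> \<nu> p = ((2 * real n + 1) * scal (R p) - 3 * scal (Rprime (J p) (R p)))
             / (8 * real n * ((real n)^2 - 1))"
proof (intro ballI)
  fix p assume p: "p \<in> M"
  have a: "ah (J p)" by (unfold_locales) (rule herm[OF p])
  show "(\<forall>x y z u. R p x y z u =
         1/6 * psi (J p) (ricci (R p)) x y z u + \<nu> p * R1 x y z u
         - (2 * real n - 1) / 3 * \<nu> p * R2 (J p) x y z u)
   \<and> (\<forall>y z. 3 * ricci (Rprime (J p) (R p)) y z - (real n + 1) * ricci (R p) y z
         = 1 / (2 * real n) * (3 * scal (Rprime (J p) (R p)) - (real n + 1) * scal (R p)) * inner y z)
   \<and> \<nu> p = ((2 * real n + 1) * scal (R p) - 3 * scal (Rprime (J p) (R p)))
             / (8 * real n * ((real n)^2 - 1))"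
    by (rule ah.main[OF a curv[OF p] RK[OF p] antihol[OF p] dim n2])
qed

end
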